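(* Let $T$ be a $\pi$-increasing tree with maximum vertex $v$. If $T$ is irreducible, then the $v$-dependence graph $G_v(T)$ is a tree rooted at $\pi^v$ with all edges directed towards the root (i.e., $\pi^v$ has outdegree $0$ and every other vertex has outdegree exactly $1$, and the underlying graph is a tree).
   Context: Standing assumptions: $r\ge2$ and $\pi$ is a set partition of $\{1,\dots,r\}$ having $\{1\}$ as a block; its blocks are $\pi_1,\dots,\pi_k$ with maxima $\mu_i=\max\pi_i$; $\pi^x$ denotes the block containing $x$. A set $\mathcal{S}$ is $\pi$-compatible if it is a union of blocks of $\pi$. An unordered increasing tree is a rooted tree on distinct positive integers, sons unordered, each son larger than its father. A $\pi$-increasing tree is an unordered increasing tree $T$ whose vertex-set is $\pi$-compatible and such that for any two elements $i<j$ of a same block of $\pi$ contained in $V(T)$, $i$ is an ancestor of $j$ in $T$. $v$-decomposition: for a vertex $v$ of $T$ with chain $a_1<\dots<a_\ell=v$ from the root to $v$, removing the chain edges leaves components $T^{(a_j)}$ rooted at $a_j$. $v$-dependence graph $G_v(T)$ of a $\pi$-increasing tree $T$: a directed graph whose vertices are the blocks of $\pi$ contained in $V(T)$; for each such block $\pi_i$ whose maximum $\mu_i$ is not on the chain $a_1,\dots,a_\ell$, $\mu_i$ is a non-root vertex of a unique $T^{(a_j)}$, and there is a directed edge (possibly a loop) from $\pi_i$ to $\pi^{a_j}$; there are no other edges. A $\pi$-increasing tree $T$ with maximum vertex $M$ is irreducible if $G_M(T)$ is connected (ignoring edge directions), and reducible otherwise. *)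

theory Defs
  imports Main "HOL-Library.Disjoint_Sets"
begin

(* A rooted tree with vertex set V (finite set of positive integers) is given by a
   parent function par on the non-root vertices. Increasing: every son is larger
   than its father, hence the root is Min V. *)
definition increasing_tree :: "nat set \<Rightarrow> (nat \<Rightarrow> nat) \<Rightarrow> bool" where
  "increasing_tree V par \<longleftrightarrow> finite V \<and> V \<noteq> {} \<and> 0 \<notin> V \<and>
     (\<forall>x\<in>V. x \<noteq> Min V \<longrightarrow> par x \<in> V \<and> par x < x)"

definition tree_edges :: "nat set \<Rightarrow> (nat \<Rightarrow> nat) \<Rightarrow> (nat \<times> nat) set" where
  "tree_edges V par = {(par x, x) | x. x \<in> V \<and> x \<noteq> Min V}"

definition ancestor :: "nat set \<Rightarrow> (nat \<Rightarrow> nat) \<Rightarrow> nat \<Rightarrow> nat \<Rightarrow> bool" where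
  "ancestor V par a b \<longleftrightarrow> (a, b) \<in> (tree_edges V par)\<^sup>+"

definition block :: "nat set set \<Rightarrow> nat \<Rightarrow> nat set" where
  "block P x = (THE B. B \<in> P \<and> x \<in> B)"

definition compatible :: "nat set set \<Rightarrow> nat set \<Rightarrow> bool" where
  "compatible P S \<longleftrightarrow> S = \<Union>{B \<in> P. B \<subseteq> S}"

definition pi_increasing :: "nat set set \<Rightarrow> nat set \<Rightarrow> (nat \<Rightarrow> nat) \<Rightarrow> bool" where
  "pi_increasing P V par \<longleftrightarrow> increasing_tree V par \<and> compatible P V \<and>
     (\<forall>B\<in>P. B \<subseteq> V \<longrightarrow> (\<forall>i\<in>B. \<forall>j\<in>B. i < j \<longrightarrow> ancestor V par i j))"

definition chain_to :: "nat set \<Rightarrow> (nat \<Rightarrow> nat) \<Rightarrow> nat \<Rightarrow> nat set" where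
  "chain_to V par v = {a. a = v \<or> ancestor V par a v}"

definition decomp_edges :: "nat set \<Rightarrow> (nat \<Rightarrow> nat) \<Rightarrow> nat \<Rightarrow> (nat \<times> nat) set" where
  "decomp_edges V par v = {(par x, x) | x. x \<in> V \<and> x \<noteq> Min V \<and> x \<notin> chain_to V par v}"

(* root a_j of the component T^(a_j) of the v-decomposition containing u *)
definition comp_root :: "nat set \<Rightarrow> (nat \<Rightarrow> nat) \<Rightarrow> nat \<Rightarrow> nat \<Rightarrow> nat" where
  "comp_root V par v u = (THE a. a \<in> chain_to V par v \<and> (a, u) \<in> (decomp_edges V par v)\<^sup>*)"

definition dep_vertices :: "nat set set \<Rightarrow> nat set \<Rightarrow> nat set set" where
  "dep_vertices P V = {B \<in> P. B \<subseteq> V}"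

definition dep_edges :: "nat set set \<Rightarrow> nat set \<Rightarrow> (nat \<Rightarrow> nat) \<Rightarrow> nat \<Rightarrow> (nat set \<times> nat set) set" where
  "dep_edges P V par v =
     {(B, block P (comp_root V par v (Max B))) | B.
        B \<in> P \<and> B \<subseteq> V \<and> Max B \<notin> chain_to V par v}"

definition weakly_connected :: "'a set \<Rightarrow> ('a \<times> 'a) set \<Rightarrow> bool" where
  "weakly_connected N E \<longleftrightarrow> (\<forall>x\<in>N. \<forall>y\<in>N. (x, y) \<in> (E \<union> E\<inverse>)\<^sup>*)"

definition irreducible_tree :: "nat set set \<Rightarrow> nat set \<Rightarrow> (nat \<Rightarrow> nat) \<Rightarrow> bool" where
  "irreducible_tree P V par \<longleftrightarrow>
     weakly_connected (dep_vertices P V) (dep_edges P V par (Max V))"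

(* the underlying undirected (multi)graph of the directed graph (N, E) is a tree:
   each directed edge (including loops, and both of a pair of opposite edges) counts
   as one undirected edge; a connected multigraph on n vertices with n-1 edges is a tree *)
definition underlying_tree :: "'a set \<Rightarrow> ('a \<times> 'a) set \<Rightarrow> bool" where
  "underlying_tree N E \<longleftrightarrow> finite N \<and> N \<noteq> {} \<and> E \<subseteq> N \<times> N \<and>
     weakly_connected N E \<and> card E = card N - 1"

definition outdeg :: "('a \<times> 'a) set \<Rightarrow> 'a \<Rightarrow> nat" where
  "outdeg E x = card {y. (x, y) \<in> E}"

end

theory Submission
  imports Defs
begin

lemma part_uniq:
  assumes "partition_on A P" "B \<in> P" "C \<in> P" "x \<in> B" "x \<in> C"
  shows "B = C"
proof (rule ccontr)
  assume "B \<noteq> C"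
  hence "B \<inter> C = {}" using disjointD[OF partition_onD2[OF assms(1)] assms(2,3)] by simp
  thus False using assms(4,5) by blast
qed

lemma block_eq:
  assumes "partition_on A P" "B \<in> P" "x \<in> B"
  shows "block P x = B"
  unfolding block_def
proof (rule the_equality)
  show "B \<in> P \<and> x \<in> B" using assms by simp
next
  fix C assume "C \<in> P \<and> x \<in> C"
  thus "C = B" using part_uniq[OF assms(1), of C B x] assms by simp
qed

lemma root_anc:
  assumes "increasing_tree V par"
  shows "x \<in> V \<Longrightarrow> x \<noteq> Min V \<Longrightarrow> (Min V, x) \<in> (tree_edges V par)\<^sup>+"
proof (induction x rule: less_induct)
  case (less x)
  have p: "par x \<in> V" "par x < x" using assms less.prems unfolding increasing_tree_def by auto
  have e: "(par x, x) \<in> tree_edges V par" using less.prems unfolding tree_edges_def by auto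
  show ?case
  proof (cases "par x = Min V")
    case True thus ?thesis using e by auto
  next
    case False
    with less.IH[OF p(2) p(1)] e show ?thesis by auto
  qed
qed

lemma D_last:
  assumes "(a, u) \<in> (decomp_edges V par v)\<^sup>*"
  shows "u = a \<or> (u \<in> V \<and> u \<noteq> Min V \<and> u \<notin> chain_to V par v \<and> (a, par u) \<in> (decomp_edges V par v)\<^sup>*)"
  using assms
proof (cases rule: rtranclE)
  case (step y)
  thus ?thesis unfolding decomp_edges_def by auto
qed simp

lemma D_exist:
  assumes "increasing_tree V par" "v \<in> V"
  shows "u \<in> V \<Longrightarrow> \<exists>a\<in>chain_to V par v. (a, u) \<in> (decomp_edges V par v)\<^sup>*"
proof (induction u rule: less_induct)
  case (less u)
  show ?case
  proof (cases "u \<in> chain_to V par v")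
    case True thus ?thesis by blast
  next
    case False
    have "Min V \<in> chain_to V par v"
      using root_anc[OF assms(1) assms(2)] unfolding chain_to_def ancestor_def by auto
    hence "u \<noteq> Min V" using False by auto
    hence p: "par u \<in> V" "par u < u" using assms less.prems unfolding increasing_tree_def by auto
    obtain a where a: "a \<in> chain_to V par v" "(a, par u) \<in> (decomp_edges V par v)\<^sup>*"
      using less.IH[OF p(2) p(1)] by blast
    have "(par u, u) \<in> decomp_edges V par v"
      using False \<open>u \<noteq> Min V\<close> less.prems unfolding decomp_edges_def by auto
    with a show ?thesis by (meson rtrancl.rtrancl_into_rtrancl)
  qed
qed

lemma D_uniq:
  assumes "increasing_tree V par" "a \<in> chain_to V par v" "a' \<in> chain_to V par v"
  shows "(a, u) \<in> (decomp_edges V par v)\<^sup>* \<Longrightarrow> (a', u) \<in> (decomp_edges V par v)\<^sup>* \<Longrightarrow> a = a'"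
proof (induction u rule: less_induct)
  case (less u)
  note h1 = D_last[OF less.prems(1)] and h2 = D_last[OF less.prems(2)]
  show ?case
  proof (cases "u = a")
    case True
    thus ?thesis using h2 assms by auto
  next
    case False
    with h1 have u: "u \<in> V" "u \<noteq> Min V" "u \<notin> chain_to V par v"
      "(a, par u) \<in> (decomp_edges V par v)\<^sup>*" by auto
    with h2 assms have u2: "(a', par u) \<in> (decomp_edges V par v)\<^sup>*" by auto
    have "par u < u" using assms(1) u unfolding increasing_tree_def by auto
    from less.IH[OF this u(4) u2] show ?thesis .
  qed
qed

lemma comp_root_chain:
  assumes "increasing_tree V par" "v \<in> V" "u \<in> V"
  shows "comp_root V par v u \<in> chain_to V par v"
proof -
  obtain a where a: "a \<in> chain_to V par v" "(a, u) \<in> (decomp_edges V par v)\<^sup>*"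
    using D_exist[OF assms] by blast
  have "comp_root V par v u = a" unfolding comp_root_def
  proof (rule the_equality)
    show "a \<in> chain_to V par v \<and> (a, u) \<in> (decomp_edges V par v)\<^sup>*" using a by simp
  next
    fix b assume b: "b \<in> chain_to V par v \<and> (b, u) \<in> (decomp_edges V par v)\<^sup>*"
    show "b = a" using D_uniq[OF assms(1) conjunct1[OF b] a(1) conjunct2[OF b] a(2)] .
  qed
  thus ?thesis using a by simp
qed

lemma chain_sub:
  assumes "increasing_tree V par" "v \<in> V"
  shows "chain_to V par v \<subseteq> V"
proof
  fix a assume "a \<in> chain_to V par v"
  hence "a = v \<or> (a, v) \<in> (tree_edges V par)\<^sup>+" unfolding chain_to_def ancestor_def by auto
  thus "a \<in> V"
  proof
    assume "(a, v) \<in> (tree_edges V par)\<^sup>+"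
    then obtain y where "(a, y) \<in> tree_edges V par" using tranclD by metis
    thus ?thesis using assms(1) unfolding tree_edges_def increasing_tree_def by auto
  qed (use assms in auto)
qed

lemma unique_sink:
  assumes func: "\<And>x y. (x, y) \<in> E \<Longrightarrow> x \<notin> S \<and> y = f x"
    and wc: "weakly_connected N E"
    and s1: "s1 \<in> S" "s1 \<in> N" and s2: "s2 \<in> S" "s2 \<in> N"
  shows "s1 = s2"
proof -
  define F where "F x = (if x \<in> S then x else f x)" for x
  define g where "g x = (THE s. s \<in> S \<and> (\<exists>k. (F ^^ k) x = s))" for x
  have fixk: "(F ^^ k) s = s" if "s \<in> S" for s k
    by (induction k) (use that in \<open>auto simp: F_def\<close>)
  have gs: "g s = s" if "s \<in> S" for s
    unfolding g_def by (rule the_equality) (use that fixk in auto)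
  have gstep: "g x = g (f x)" if "x \<notin> S" for x
  proof -
    have *: "(\<exists>k. (F ^^ k) x = s) \<longleftrightarrow> (\<exists>k. (F ^^ k) (f x) = s)" if "s \<in> S" for s
    proof
      assume "\<exists>k. (F ^^ k) x = s"
      then obtain k where k: "(F ^^ k) x = s" by blast
      show "\<exists>k. (F ^^ k) (f x) = s"
      proof (cases k)
        case 0 thus ?thesis using k \<open>x \<notin> S\<close> that by auto
      next
        case (Suc m)
        have "(F ^^ Suc m) x = (F ^^ m) (F x)" by (simp only: funpow_Suc_right o_apply)
        hence "(F ^^ m) (F x) = s" using k Suc by simp
        thus ?thesis using \<open>x \<notin> S\<close> by (auto simp: F_def)
      qed
    next
      assume "\<exists>k. (F ^^ k) (f x) = s"
      then obtain k where "(F ^^ k) (f x) = s" by blast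
      moreover have "(F ^^ Suc k) x = (F ^^ k) (F x)" by (simp only: funpow_Suc_right o_apply)
      moreover have "F x = f x" using \<open>x \<notin> S\<close> by (simp add: F_def)
      ultimately have "(F ^^ Suc k) x = s" by simp
      thus "\<exists>k. (F ^^ k) x = s" by blast
    qed
    show ?thesis unfolding g_def
      by (rule arg_cong[where f=The], rule ext) (use * in blast)
  qed
  have gpath: "g x = g y" if "(x, y) \<in> (E \<union> E\<inverse>)\<^sup>*" for x y
    using that
  proof (induction rule: rtrancl_induct)
    case (step y z)
    from step.hyps(2) have "g y = g z"
    proof
      assume "(y, z) \<in> E" hence "y \<notin> S" "z = f y" using func[of y z] by auto
      thus ?thesis using gstep[of y] by simp
    next
      assume "(y, z) \<in> E\<inverse>" hence "(z, y) \<in> E" by simp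
      hence "z \<notin> S" "y = f z" using func[of z y] by auto
      thus ?thesis using gstep[of z] by simp
    qed
    thus ?case using step.IH by simp
  qed simp
  have "(s1, s2) \<in> (E \<union> E\<inverse>)\<^sup>*" using wc s1 s2 unfolding weakly_connected_def by blast
  from gpath[OF this] have "g s1 = g s2" .
  thus ?thesis using gs[OF s1(1)] gs[OF s2(1)] by simp
qed

theorem lemma3p4:
  fixes r :: nat and P :: "nat set set" and V :: "nat set" and par :: "nat \<Rightarrow> nat"
  assumes "r \<ge> 2"
    and "partition_on {1..r} P"
    and "{1} \<in> P"
    and "pi_increasing P V par"
    and "irreducible_tree P V par"
  shows "underlying_tree (dep_vertices P V) (dep_edges P V par (Max V))
       \<and> block P (Max V) \<in> dep_vertices P V
       \<and> outdeg (dep_edges P V par (Max V)) (block P (Max V)) = 0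
       \<and> (\<forall>B \<in> dep_vertices P V. B \<noteq> block P (Max V) \<longrightarrow>
            outdeg (dep_edges P V par (Max V)) B = 1)"
proof -
  define v where "v = Max V"
  define N where "N = dep_vertices P V"
  define E where "E = dep_edges P V par v"
  define C where "C = chain_to V par v"
  define S where "S = {B. Max B \<in> C}"
  define f where "f B = block P (comp_root V par v (Max B))" for B
  note part = assms(2)
  have it: "increasing_tree V par" and comp: "compatible P V"
    using assms(4) unfolding pi_increasing_def by auto
  have finV: "finite V" "V \<noteq> {}" using it unfolding increasing_tree_def by auto
  have vV: "v \<in> V" using finV unfolding v_def by simp
  have Veq: "\<Union>{B \<in> P. B \<subseteq> V} = V" using comp unfolding compatible_def by (rule sym)
  have finP: "finite P" using finite_elements[OF _ part] by simp
  have blk_sub: "block P x \<in> N \<and> x \<in> block P x" if "x \<in> V" for x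
  proof -
    have "x \<in> \<Union>{B \<in> P. B \<subseteq> V}" using that Veq by simp
    then obtain B where B: "B \<in> P" "B \<subseteq> V" "x \<in> B" by blast
    have "block P x = B" using block_eq[OF part B(1) B(3)] .
    thus ?thesis using B unfolding N_def dep_vertices_def by auto
  qed
  have blkfin: "finite B" "B \<noteq> {}" if "B \<in> P" for B
  proof -
    have "B \<subseteq> \<Union>P" using that by blast
    hence "B \<subseteq> {1..r}" using partition_onD1[OF part] by simp
    thus "finite B" using finite_subset by blast
    show "B \<noteq> {}" using that partition_onD3[OF part] by blast
  qed
  have MaxB: "Max B \<in> V" if "B \<in> N" for B
  proof -
    have "B \<in> P" "B \<subseteq> V" using that unfolding N_def dep_vertices_def by auto
    thus ?thesis using blkfin[of B] Max_in by blast
  qed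
  have fN: "f B \<in> N" if "B \<in> N" for B
  proof -
    have "comp_root V par v (Max B) \<in> C"
      using comp_root_chain[OF it vV MaxB[OF that]] unfolding C_def .
    hence "comp_root V par v (Max B) \<in> V" using chain_sub[OF it vV] unfolding C_def by blast
    thus ?thesis using blk_sub unfolding f_def by blast
  qed
  have Edef: "E = (\<lambda>B. (B, f B)) ` {B \<in> N. B \<notin> S}"
    unfolding E_def dep_edges_def N_def dep_vertices_def S_def C_def f_def by auto
  have func: "\<And>x y. (x, y) \<in> E \<Longrightarrow> x \<notin> S \<and> y = f x" unfolding Edef by auto
  have wc: "weakly_connected N E" using assms(5) unfolding irreducible_tree_def N_def E_def v_def by simp
  define b where "b = block P v"
  have bN: "b \<in> N" and vb: "v \<in> b" using blk_sub[OF vV] unfolding b_def by auto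
  have "Max b = v"
  proof -
    have "b \<subseteq> V" using bN unfolding N_def dep_vertices_def by auto
    hence "Max b \<le> v" using finV blkfin bN vb unfolding v_def N_def dep_vertices_def
      by (metis (no_types, lifting) Max_in Max_mono mem_Collect_eq subset_iff)
    moreover have "v \<le> Max b" using blkfin bN vb unfolding N_def dep_vertices_def by auto
    ultimately show ?thesis by simp
  qed
  hence bS: "b \<in> S" unfolding S_def C_def chain_to_def by auto
  have onlyb: "{B \<in> N. B \<notin> S} = N - {b}"
    using unique_sink[OF func wc _ _ bS bN] bS by blast
  have finN: "finite N" using finP unfolding N_def dep_vertices_def by auto
  have cardE: "card E = card N - 1"
    unfolding Edef onlyb by (subst card_image) (auto simp: inj_on_def bN finN)
  have sub: "E \<subseteq> N \<times> N" unfolding Edef using fN by auto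
  have "{y. (b, y) \<in> E} = {}" using func bS by blast
  hence od0: "outdeg E b = 0" unfolding outdeg_def by simp
  have od1: "outdeg E B = 1" if "B \<in> N" "B \<noteq> b" for B
  proof -
    have "{y. (B, y) \<in> E} = {f B}" using that onlyb unfolding Edef by auto
    thus ?thesis unfolding outdeg_def by simp
  qed
  show ?thesis
    using cardE sub od0 od1 wc bN finN
    unfolding underlying_tree_def N_def[symmetric] E_def[symmetric] v_def[symmetric] b_def[symmetric]
    by auto
qed

end
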